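(* Let $S$ be an inf-semilattice ordered Cu-semigroup and let $\alpha$ be an action of a finite group $G$ on $S$ by Cu-isomorphisms. Then the fixed-point set $S^\alpha:=\{x\in S:\alpha_g(x)=x\text{ for all }g\in G\}$ is a sub-Cu-semigroup of $S$. Moreover, if $S$ is weakly cancellative (respectively satisfies (O5), (O6), (O7)), then so is (respectively does) $S^\alpha$.
   Context: A Cu-semigroup is a positively ordered commutative monoid satisfying (O1)–(O4): increasing sequences have suprema; each element is the supremum of a $\ll$-increasing sequence; $x'\ll x,y'\ll y\Rightarrow x'+y'\ll x+y$; suprema of increasing sequences are additive. $x\ll y$: whenever $y\le\sup z_n$ for increasing $(z_n)$, $x\le z_m$ for some $m$. A Cu-isomorphism is a bijective monoid map which together with its inverse preserves order, suprema of increasing sequences and $\ll$. Inf-semilattice ordered: any two elements have an infimum $x\wedge y$ and $(x+z)\wedge(y+z)=(x\wedge y)+z$ for all $x,y,z$. Sub-Cu-semigroup: a submonoid that is a Cu-semigroup with the inherited order such that the inclusion preserves order, suprema of increasing sequences and $\ll$. Weakly cancellative: $x+z\ll y+z$ implies $x\ll y$. (O5): if $x+y\le z$, $x'\ll x$, $y'\ll y$ then some $c$ has $y'\ll c$ and $x'+c\le z\le x+c$. (O6): if $x'\ll x\le y+z$ then some $v,w$ have $v\le x,y$, $w\le x,z$, $x'\le v+w$. (O7): if $x'\ll x\le w$, $y'\ll y\le w$ then some $z$ has $x',y'\ll z\le w,x+y$. *)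

theory Defs
  imports "HOL-Algebra.Group"
begin

text \<open>All notions are relativised to a subset A of an ambient positively ordered
commutative monoid (a type of class ordered_comm_monoid_add), with the inherited
order and addition.  The ambient Cu-semigroup S is A = UNIV.\<close>

definition incr_seq :: "(nat \<Rightarrow> 'a::order) \<Rightarrow> bool" where
  "incr_seq z \<longleftrightarrow> (\<forall>n. z n \<le> z (Suc n))"

definition is_sup_on :: "'a::order set \<Rightarrow> (nat \<Rightarrow> 'a) \<Rightarrow> 'a \<Rightarrow> bool" where
  "is_sup_on A z s \<longleftrightarrow> s \<in> A \<and> (\<forall>n. z n \<le> s) \<and>
     (\<forall>u\<in>A. (\<forall>n. z n \<le> u) \<longrightarrow> s \<le> u)"

definition ll_on :: "'a::order set \<Rightarrow> 'a \<Rightarrow> 'a \<Rightarrow> bool" where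
  "ll_on A x y \<longleftrightarrow> (\<forall>z s. (\<forall>n. z n \<in> A) \<longrightarrow> incr_seq z \<longrightarrow> is_sup_on A z s \<longrightarrow>
      y \<le> s \<longrightarrow> (\<exists>m. x \<le> z m))"

definition submonoid_on :: "'a::ordered_comm_monoid_add set \<Rightarrow> bool" where
  "submonoid_on A \<longleftrightarrow> 0 \<in> A \<and> (\<forall>x\<in>A. \<forall>y\<in>A. x + y \<in> A)"

definition Cu_on :: "'a::ordered_comm_monoid_add set \<Rightarrow> bool" where
  "Cu_on A \<longleftrightarrow> submonoid_on A \<and> (\<forall>x\<in>A. 0 \<le> x) \<and>
    \<comment> \<open>(O1)\<close>
    (\<forall>z. (\<forall>n. z n \<in> A) \<longrightarrow> incr_seq z \<longrightarrow> (\<exists>s. is_sup_on A z s)) \<and>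
    \<comment> \<open>(O2)\<close>
    (\<forall>x\<in>A. \<exists>z. (\<forall>n. z n \<in> A) \<and> (\<forall>n. ll_on A (z n) (z (Suc n))) \<and> is_sup_on A z x) \<and>
    \<comment> \<open>(O3)\<close>
    (\<forall>x'\<in>A. \<forall>x\<in>A. \<forall>y'\<in>A. \<forall>y\<in>A. ll_on A x' x \<longrightarrow> ll_on A y' y \<longrightarrow> ll_on A (x' + y') (x + y)) \<and>
    \<comment> \<open>(O4)\<close>
    (\<forall>a b s t. (\<forall>n. a n \<in> A) \<longrightarrow> (\<forall>n. b n \<in> A) \<longrightarrow> incr_seq a \<longrightarrow> incr_seq b \<longrightarrow>
       is_sup_on A a s \<longrightarrow> is_sup_on A b t \<longrightarrow> is_sup_on A (\<lambda>n. a n + b n) (s + t))"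

definition sub_Cu :: "'a::ordered_comm_monoid_add set \<Rightarrow> bool" where
  "sub_Cu T \<longleftrightarrow> submonoid_on T \<and> Cu_on T \<and>
    (\<forall>z s. (\<forall>n. z n \<in> T) \<longrightarrow> incr_seq z \<longrightarrow> is_sup_on T z s \<longrightarrow> is_sup_on UNIV z s) \<and>
    (\<forall>x\<in>T. \<forall>y\<in>T. ll_on T x y \<longrightarrow> ll_on UNIV x y)"

definition is_inf_on :: "'a::order set \<Rightarrow> 'a \<Rightarrow> 'a \<Rightarrow> 'a \<Rightarrow> bool" where
  "is_inf_on A x y m \<longleftrightarrow> m \<in> A \<and> m \<le> x \<and> m \<le> y \<and> (\<forall>u\<in>A. u \<le> x \<longrightarrow> u \<le> y \<longrightarrow> u \<le> m)"

definition inf_semilattice_ordered_on :: "'a::ordered_comm_monoid_add set \<Rightarrow> bool" where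
  "inf_semilattice_ordered_on A \<longleftrightarrow>
     (\<forall>x\<in>A. \<forall>y\<in>A. \<exists>m. is_inf_on A x y m) \<and>
     (\<forall>x\<in>A. \<forall>y\<in>A. \<forall>z\<in>A. \<forall>m. is_inf_on A x y m \<longrightarrow> is_inf_on A (x + z) (y + z) (m + z))"

definition Cu_iso :: "('a::ordered_comm_monoid_add \<Rightarrow> 'a) \<Rightarrow> bool" where
  "Cu_iso f \<longleftrightarrow> bij f \<and> f 0 = 0 \<and> (\<forall>x y. f (x + y) = f x + f y) \<and>
     (\<forall>x y. x \<le> y \<longleftrightarrow> f x \<le> f y) \<and>
     (\<forall>z s. incr_seq z \<longrightarrow> is_sup_on UNIV z s \<longrightarrow> is_sup_on UNIV (f \<circ> z) (f s)) \<and>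
     (\<forall>z s. incr_seq z \<longrightarrow> is_sup_on UNIV z s \<longrightarrow> is_sup_on UNIV (inv_into UNIV f \<circ> z) (inv_into UNIV f s)) \<and>
     (\<forall>x y. ll_on UNIV x y \<longrightarrow> ll_on UNIV (f x) (f y)) \<and>
     (\<forall>x y. ll_on UNIV x y \<longrightarrow> ll_on UNIV (inv_into UNIV f x) (inv_into UNIV f y))"

definition weakly_cancellative_on :: "'a::ordered_comm_monoid_add set \<Rightarrow> bool" where
  "weakly_cancellative_on A \<longleftrightarrow>
     (\<forall>x\<in>A. \<forall>y\<in>A. \<forall>z\<in>A. ll_on A (x + z) (y + z) \<longrightarrow> ll_on A x y)"

definition O5_on :: "'a::ordered_comm_monoid_add set \<Rightarrow> bool" where
  "O5_on A \<longleftrightarrow> (\<forall>x\<in>A. \<forall>y\<in>A. \<forall>z\<in>A. \<forall>x'\<in>A. \<forall>y'\<in>A.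
     x + y \<le> z \<longrightarrow> ll_on A x' x \<longrightarrow> ll_on A y' y \<longrightarrow>
     (\<exists>c\<in>A. ll_on A y' c \<and> x' + c \<le> z \<and> z \<le> x + c))"

definition O6_on :: "'a::ordered_comm_monoid_add set \<Rightarrow> bool" where
  "O6_on A \<longleftrightarrow> (\<forall>x'\<in>A. \<forall>x\<in>A. \<forall>y\<in>A. \<forall>z\<in>A.
     ll_on A x' x \<longrightarrow> x \<le> y + z \<longrightarrow>
     (\<exists>v\<in>A. \<exists>w\<in>A. v \<le> x \<and> v \<le> y \<and> w \<le> x \<and> w \<le> z \<and> x' \<le> v + w))"

definition O7_on :: "'a::ordered_comm_monoid_add set \<Rightarrow> bool" where
  "O7_on A \<longleftrightarrow> (\<forall>x'\<in>A. \<forall>x\<in>A. \<forall>y'\<in>A. \<forall>y\<in>A. \<forall>w\<in>A.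
     ll_on A x' x \<longrightarrow> x \<le> w \<longrightarrow> ll_on A y' y \<longrightarrow> y \<le> w \<longrightarrow>
     (\<exists>z\<in>A. ll_on A x' z \<and> ll_on A y' z \<and> z \<le> w \<and> z \<le> x + y))"

definition fixed_points :: "('g, 'm) monoid_scheme \<Rightarrow> ('g \<Rightarrow> 'a \<Rightarrow> 'a) \<Rightarrow> 'a set" where
  "fixed_points G \<alpha> = {x. \<forall>g\<in>carrier G. \<alpha> g x = x}"

end

theory Submission
  imports Defs
begin

lemma ll_mono: "ll_on A x y \<Longrightarrow> x' \<le> x \<Longrightarrow> y \<le> y' \<Longrightarrow> ll_on A x' y'"
  unfolding ll_on_def by (meson order_trans)

lemma incr_le: "incr_seq z \<Longrightarrow> m \<le> n \<Longrightarrow> z m \<le> z n"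
  unfolding incr_seq_def by (rule lift_Suc_mono_le) auto

lemma sup_unique: "is_sup_on A z s \<Longrightarrow> is_sup_on A z t \<Longrightarrow> s = t"
  unfolding is_sup_on_def by (meson order_antisym)

lemma fin_inf_exists:
  fixes f :: "'i \<Rightarrow> 'a::ordered_comm_monoid_add"
  assumes inf: "inf_semilattice_ordered_on (UNIV::'a set)"
    and "finite F" "F \<noteq> {}"
  shows "\<exists>m. (\<forall>i\<in>F. m \<le> f i) \<and> (\<forall>b u. (\<forall>i\<in>F. u \<le> f i + b) \<longrightarrow> u \<le> m + b)"
  using assms(2,3)
proof (induction F rule: finite_ne_induct)
  case (singleton x)
  then show ?case by auto
next
  case (insert j F)
  then obtain m where m1: "\<forall>i\<in>F. m \<le> f i"
    and m2: "\<forall>b u. (\<forall>i\<in>F. u \<le> f i + b) \<longrightarrow> u \<le> m + b" by blast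
  from inf obtain mi where mi: "is_inf_on UNIV m (f j) mi"
    unfolding inf_semilattice_ordered_on_def by blast
  have tr: "is_inf_on UNIV (m + b) (f j + b) (mi + b)" for b
    using inf mi unfolding inf_semilattice_ordered_on_def by blast
  show ?case
  proof (intro exI conjI allI impI ballI)
    fix i assume "i \<in> insert j F"
    then show "mi \<le> f i" using mi m1 unfolding is_inf_on_def by (auto intro: order_trans)
  next
    fix b u assume u: "\<forall>i\<in>insert j F. u \<le> f i + b"
    then have "u \<le> m + b" using m2 by auto
    moreover have "u \<le> f j + b" using u by auto
    ultimately show "u \<le> mi + b" using tr[of b] unfolding is_inf_on_def by auto
  qed
qed

locale fixact =
  fixes G :: "('g, 'm) monoid_scheme" and \<alpha> :: "'g \<Rightarrow> 'a::ordered_comm_monoid_add \<Rightarrow> 'a"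
  assumes S_Cu: "Cu_on (UNIV :: 'a set)"
    and S_inf: "inf_semilattice_ordered_on (UNIV :: 'a set)"
    and G: "group G" and G_fin: "finite (carrier G)"
    and act_iso: "\<forall>g\<in>carrier G. Cu_iso (\<alpha> g)"
    and act_one: "\<alpha> \<one>\<^bsub>G\<^esub> = id"
    and act_mult: "\<forall>g\<in>carrier G. \<forall>h\<in>carrier G. \<alpha> (g \<otimes>\<^bsub>G\<^esub> h) = \<alpha> g \<circ> \<alpha> h"
begin

abbreviation "T \<equiv> fixed_points G \<alpha>"

lemma memT: "x \<in> T \<longleftrightarrow> (\<forall>g\<in>carrier G. \<alpha> g x = x)"
  unfolding fixed_points_def by simp

lemma a_le: "g \<in> carrier G \<Longrightarrow> \<alpha> g x \<le> \<alpha> g y \<longleftrightarrow> x \<le> y"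
proof -
  assume g: "g \<in> carrier G"
  have "Cu_iso (\<alpha> g)" using act_iso g by blast
  then have "\<forall>x y. (x \<le> y) = (\<alpha> g x \<le> \<alpha> g y)" unfolding Cu_iso_def by (elim conjE)
  then show ?thesis by simp
qed

lemma a_add: "g \<in> carrier G \<Longrightarrow> \<alpha> g (x + y) = \<alpha> g x + \<alpha> g y"
  using act_iso unfolding Cu_iso_def by (metis (no_types, lifting))

lemma a_zero: "g \<in> carrier G \<Longrightarrow> \<alpha> g 0 = 0"
  using act_iso unfolding Cu_iso_def by (metis (no_types, lifting))

lemma a_sup: "g \<in> carrier G \<Longrightarrow> incr_seq z \<Longrightarrow> is_sup_on UNIV z s \<Longrightarrow> is_sup_on UNIV (\<alpha> g \<circ> z) (\<alpha> g s)"
  using act_iso unfolding Cu_iso_def by (metis (no_types, lifting))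

lemma a_ll: "g \<in> carrier G \<Longrightarrow> ll_on UNIV x y \<Longrightarrow> ll_on UNIV (\<alpha> g x) (\<alpha> g y)"
  using act_iso unfolding Cu_iso_def by (metis (no_types, lifting))

lemma a_one: "\<alpha> \<one>\<^bsub>G\<^esub> x = x"
  using act_one by simp

lemma one_in: "\<one>\<^bsub>G\<^esub> \<in> carrier G"
  using G by (simp add: group.is_monoid monoid.one_closed)

lemma a_comp: "g \<in> carrier G \<Longrightarrow> h \<in> carrier G \<Longrightarrow> \<alpha> g (\<alpha> h x) = \<alpha> (g \<otimes>\<^bsub>G\<^esub> h) x"
  using act_mult by simp

lemma a_inv: "h \<in> carrier G \<Longrightarrow> \<alpha> h (\<alpha> (inv\<^bsub>G\<^esub> h) x) = x"
  using a_comp[of h "inv\<^bsub>G\<^esub> h" x] G a_one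
  by (simp add: group.inv_closed group.r_inv)

lemma a_inv2: "h \<in> carrier G \<Longrightarrow> k \<in> carrier G \<Longrightarrow> \<alpha> h (\<alpha> (inv\<^bsub>G\<^esub> h \<otimes>\<^bsub>G\<^esub> k) x) = \<alpha> k x"
proof -
  assume h: "h \<in> carrier G" and k: "k \<in> carrier G"
  have "\<alpha> (inv\<^bsub>G\<^esub> h \<otimes>\<^bsub>G\<^esub> k) x = \<alpha> (inv\<^bsub>G\<^esub> h) (\<alpha> k x)"
    using a_comp[of "inv\<^bsub>G\<^esub> h" k x] h k G by (simp add: group.inv_closed)
  then show ?thesis using a_inv h by simp
qed

lemma pos: "0 \<le> (x::'a)"
  using S_Cu unfolding Cu_on_def by auto

lemma S_O1: "incr_seq (z::nat\<Rightarrow>'a) \<Longrightarrow> \<exists>s. is_sup_on UNIV z s"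
proof -
  have "\<forall>z. (\<forall>n. z n \<in> (UNIV::'a set)) \<longrightarrow> incr_seq z \<longrightarrow> (\<exists>s. is_sup_on UNIV z s)"
    using S_Cu unfolding Cu_on_def by blast
  then show "incr_seq (z::nat\<Rightarrow>'a) \<Longrightarrow> \<exists>s. is_sup_on UNIV z s" by simp
qed

lemma S_O2: "\<exists>z. (\<forall>n. ll_on UNIV (z n) (z (Suc n))) \<and> is_sup_on UNIV z (x::'a)"
proof -
  have "\<forall>x\<in>(UNIV::'a set). \<exists>z. (\<forall>n. z n \<in> (UNIV::'a set)) \<and> (\<forall>n. ll_on UNIV (z n) (z (Suc n))) \<and> is_sup_on UNIV z x"
    using S_Cu unfolding Cu_on_def by blast
  then show ?thesis by simp
qed

lemma S_O3: "ll_on UNIV (x'::'a) x \<Longrightarrow> ll_on UNIV y' y \<Longrightarrow> ll_on UNIV (x' + y') (x + y)"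
  using S_Cu unfolding Cu_on_def by auto

lemma S_O4: "incr_seq (a::nat\<Rightarrow>'a) \<Longrightarrow> incr_seq b \<Longrightarrow> is_sup_on UNIV a s \<Longrightarrow> is_sup_on UNIV b t
   \<Longrightarrow> is_sup_on UNIV (\<lambda>n. a n + b n) (s + t)"
  using S_Cu unfolding Cu_on_def by auto

lemma ll_incr: "ll_on UNIV (x::'a) y \<Longrightarrow> x \<le> y"
proof -
  assume "ll_on UNIV x y"
  moreover have "incr_seq (\<lambda>n. y)" unfolding incr_seq_def by simp
  moreover have "is_sup_on UNIV (\<lambda>n. y) y" unfolding is_sup_on_def by simp
  ultimately show ?thesis unfolding ll_on_def by auto
qed

lemma sup_fixed:
  assumes "\<forall>n. z n \<in> T" "incr_seq z" "is_sup_on UNIV z s" shows "s \<in> T"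
  unfolding memT
proof
  fix g assume g: "g \<in> carrier G"
  have "is_sup_on UNIV (\<alpha> g \<circ> z) (\<alpha> g s)" using a_sup[OF g assms(2,3)] .
  moreover have "\<alpha> g \<circ> z = z" using assms(1) g unfolding memT by auto
  ultimately show "\<alpha> g s = s" using sup_unique assms(3) by metis
qed

lemma supT_iff:
  assumes "\<forall>n. z n \<in> T" "incr_seq z"
  shows "is_sup_on T z s \<longleftrightarrow> is_sup_on UNIV z s"
proof
  obtain t where t: "is_sup_on UNIV z t" using S_O1 assms(2) by blast
  have tT: "t \<in> T" using sup_fixed assms t by blast
  {
    assume s: "is_sup_on T z s"
    have "s \<le> t" using s t tT unfolding is_sup_on_def by blast
    moreover have "t \<le> s" using s t unfolding is_sup_on_def by blast
    ultimately have "s = t" by simp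
    then show "is_sup_on UNIV z s" using t by simp
  }
  assume s: "is_sup_on UNIV z s"
  then have "s \<in> T" using sup_fixed assms by blast
  then show "is_sup_on T z s" using s unfolding is_sup_on_def by blast
qed

lemma llS_llT: "ll_on UNIV (x::'a) y \<Longrightarrow> ll_on T x y"
  unfolding ll_on_def using supT_iff by blast

definition M :: "'a \<Rightarrow> 'a" where
  "M c = (SOME m. (\<forall>g\<in>carrier G. m \<le> \<alpha> g c) \<and>
      (\<forall>b u. (\<forall>g\<in>carrier G. u \<le> \<alpha> g c + b) \<longrightarrow> u \<le> m + b))"

lemma M_prop: "(\<forall>g\<in>carrier G. M c \<le> \<alpha> g c) \<and>
      (\<forall>b u. (\<forall>g\<in>carrier G. u \<le> \<alpha> g c + b) \<longrightarrow> u \<le> M c + b)"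
proof -
  have "carrier G \<noteq> {}" using one_in by blast
  then have "\<exists>m. (\<forall>g\<in>carrier G. m \<le> \<alpha> g c) \<and>
      (\<forall>b u. (\<forall>g\<in>carrier G. u \<le> \<alpha> g c + b) \<longrightarrow> u \<le> m + b)"
    using fin_inf_exists[OF S_inf G_fin, of "\<lambda>g. \<alpha> g c"] by blast
  then show ?thesis unfolding M_def by (rule someI_ex)
qed

lemma M_le: "g \<in> carrier G \<Longrightarrow> M c \<le> \<alpha> g c"
  using M_prop by blast

lemma M_le_self: "M c \<le> c"
  using M_le[OF one_in] a_one by simp

lemma M_glb_add: "(\<And>g. g \<in> carrier G \<Longrightarrow> u \<le> \<alpha> g c + b) \<Longrightarrow> u \<le> M c + b"
  using M_prop by blast

lemma M_glb: "(\<And>g. g \<in> carrier G \<Longrightarrow> u \<le> \<alpha> g c) \<Longrightarrow> u \<le> M c"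
  using M_glb_add[of u c 0] by simp

lemma M_mono: "c \<le> d \<Longrightarrow> M c \<le> M d"
  by (rule M_glb) (meson M_le a_le order_trans)

lemma M_below: "h \<in> carrier G \<Longrightarrow> \<alpha> h (M c) \<le> M c"
proof (rule M_glb)
  fix k assume h: "h \<in> carrier G" and k: "k \<in> carrier G"
  have hk: "inv\<^bsub>G\<^esub> h \<otimes>\<^bsub>G\<^esub> k \<in> carrier G" using G h k
    by (simp add: group.inv_closed group.is_monoid monoid.m_closed)
  have "\<alpha> h (M c) \<le> \<alpha> h (\<alpha> (inv\<^bsub>G\<^esub> h \<otimes>\<^bsub>G\<^esub> k) c)"
    using a_le[OF h] M_le[OF hk] by blast
  then show "\<alpha> h (M c) \<le> \<alpha> k c" using a_inv2 h k by simp
qed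

lemma M_T: "M c \<in> T"
  unfolding memT
proof
  fix h assume h: "h \<in> carrier G"
  have ih: "inv\<^bsub>G\<^esub> h \<in> carrier G" using G h by (simp add: group.inv_closed)
  have "M c = \<alpha> h (\<alpha> (inv\<^bsub>G\<^esub> h) (M c))" using a_inv h by simp
  also have "\<dots> \<le> \<alpha> h (M c)" using a_le[OF h] M_below[OF ih] by blast
  finally show "\<alpha> h (M c) = M c" using M_below[OF h] by (auto intro: order_antisym)
qed

lemma M_fixed_le: "y \<in> T \<Longrightarrow> y \<le> c \<Longrightarrow> y \<le> M c"
  by (rule M_glb) (metis a_le memT)

lemma M_incr: "incr_seq z \<Longrightarrow> incr_seq (\<lambda>n. M (z n))"
  unfolding incr_seq_def using M_mono by blast

lemma keyA:
  assumes z: "incr_seq z" and s: "is_sup_on UNIV z s" and y: "y \<in> T" "y \<le> s"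
    and y0: "ll_on UNIV y0 y"
  shows "\<exists>m. y0 \<le> M (z m)"
proof -
  have "\<forall>g\<in>carrier G. \<exists>m. y0 \<le> \<alpha> g (z m)"
  proof
    fix g assume g: "g \<in> carrier G"
    have sg: "is_sup_on UNIV (\<alpha> g \<circ> z) (\<alpha> g s)" using a_sup[OF g z s] .
    have ig: "incr_seq (\<alpha> g \<circ> z)" using z a_le[OF g] unfolding incr_seq_def by simp
    have "y \<le> \<alpha> g s" using y g a_le[OF g] unfolding memT by metis
    then show "\<exists>m. y0 \<le> \<alpha> g (z m)" using y0 sg ig unfolding ll_on_def by auto
  qed
  then obtain mf where mf: "\<And>g. g \<in> carrier G \<Longrightarrow> y0 \<le> \<alpha> g (z (mf g))" by metis
  define m where "m = Max (mf ` carrier G)"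
  have "y0 \<le> M (z m)"
  proof (rule M_glb)
    fix g assume g: "g \<in> carrier G"
    have "mf g \<le> m" unfolding m_def using G_fin g by auto
    then have "z (mf g) \<le> z m" using incr_le z by blast
    then show "y0 \<le> \<alpha> g (z m)" using mf[OF g] a_le[OF g] order_trans by blast
  qed
  then show ?thesis by blast
qed

lemma llT_llS:
  assumes x: "x \<in> T" and y: "y \<in> T" and l: "ll_on T x y"
  shows "ll_on UNIV x y"
  unfolding ll_on_def
proof (intro allI impI)
  fix z s assume "\<forall>n. z n \<in> (UNIV::'a set)" and z: "incr_seq z" and s: "is_sup_on UNIV z s"
    and ys: "y \<le> s"
  define w where "w n = M (z n)" for n
  have wT: "\<forall>n. w n \<in> T" unfolding w_def using M_T by blast
  have wi: "incr_seq w" unfolding w_def using M_incr[OF z] .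
  obtain t where t: "is_sup_on UNIV w t" using S_O1 wi by blast
  obtain yk where yk: "\<forall>n. ll_on UNIV (yk n) (yk (Suc n))" "is_sup_on UNIV yk y"
    using S_O2 by blast
  have "\<forall>k. yk k \<le> t"
  proof
    fix k
    have "ll_on UNIV (yk k) y"
      using yk ll_mono ll_incr unfolding is_sup_on_def by (meson order_refl)
    then obtain m where "yk k \<le> M (z m)" using keyA[OF z s y ys] by blast
    then show "yk k \<le> t" using t unfolding w_def is_sup_on_def by (meson order_trans)
  qed
  then have "y \<le> t" using yk(2) unfolding is_sup_on_def by blast
  moreover have "is_sup_on T w t" using supT_iff[OF wT wi] t by blast
  ultimately obtain m where "x \<le> w m" using l wT wi unfolding ll_on_def by blast
  then show "\<exists>m. x \<le> z m" unfolding w_def using M_le_self order_trans by blast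
qed

lemma ll_iff: "x \<in> T \<Longrightarrow> y \<in> T \<Longrightarrow> ll_on T x y \<longleftrightarrow> ll_on UNIV x y"
  using llT_llS llS_llT by blast


lemma T_O2:
  assumes y: "y \<in> T"
  shows "\<exists>c. (\<forall>n. c n \<in> T) \<and> incr_seq c \<and> (\<forall>n. ll_on UNIV (c n) (c (Suc n))) \<and> is_sup_on UNIV c y"
proof -
  obtain yk where yk: "\<forall>n. ll_on UNIV (yk n) (yk (Suc n))" "is_sup_on UNIV yk y"
    using S_O2 by blast
  have yi: "incr_seq yk" using yk(1) ll_incr unfolding incr_seq_def by blast
  have ykle: "yk n \<le> y" for n using yk(2) unfolding is_sup_on_def by blast
  have yl: "ll_on UNIV (yk n) y" for n
    using ll_mono[OF yk(1)[rule_format, of n] order_refl ykle[of "Suc n"]] .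
  define u where "u n = M (yk n)" for n
  have ui: "incr_seq u" unfolding u_def using M_incr[OF yi] .
  have ex: "\<exists>m. yk (Suc j) \<le> u m" for j
    using keyA[OF yi yk(2) y order_refl yl[of "Suc j"]] unfolding u_def .
  define \<psi> where "\<psi> j = (SOME m. yk (Suc j) \<le> u m)" for j
  have psi: "yk (Suc j) \<le> u (\<psi> j)" for j unfolding \<psi>_def using someI_ex[OF ex] .
  define \<phi> where "\<phi> = rec_nat 0 (\<lambda>k p. max (\<psi> p) (Suc p))"
  have phiS: "\<phi> (Suc k) = max (\<psi> (\<phi> k)) (Suc (\<phi> k))" for k by (simp add: \<phi>_def)
  define c where "c k = u (\<phi> k)" for k
  have cT: "\<forall>n. c n \<in> T" unfolding c_def u_def using M_T by blast
  have cll: "ll_on UNIV (c k) (c (Suc k))" for k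
  proof -
    have "c k \<le> yk (\<phi> k)" unfolding c_def u_def by (rule M_le_self)
    moreover have "yk (Suc (\<phi> k)) \<le> c (Suc k)"
    proof -
      have "u (\<psi> (\<phi> k)) \<le> u (\<phi> (Suc k))" using incr_le[OF ui] phiS by simp
      then show ?thesis using psi[of "\<phi> k"] unfolding c_def by (meson order_trans)
    qed
    ultimately show ?thesis using ll_mono[OF yk(1)[rule_format, of "\<phi> k"]] by blast
  qed
  have ci: "incr_seq c" using cll ll_incr unfolding incr_seq_def by blast
  have cS: "yk (Suc (\<phi> k)) \<le> c (Suc k)" for k
  proof -
    have "u (\<psi> (\<phi> k)) \<le> u (\<phi> (Suc k))" using incr_le[OF ui] phiS by simp
    then show ?thesis using psi[of "\<phi> k"] unfolding c_def by (meson order_trans)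
  qed
  have ge: "k \<le> \<phi> k" for k by (induction k) (auto simp: phiS)
  have sup: "is_sup_on UNIV c y"
    unfolding is_sup_on_def
  proof (intro conjI ballI allI impI)
    show "y \<in> UNIV" by simp
  next
    fix n show "c n \<le> y" using M_le_self ykle unfolding c_def u_def by (meson order_trans)
  next
    fix v assume "\<forall>n. c n \<le> v"
    then have "\<forall>k. yk k \<le> v"
      using cS incr_le[OF yi] ge by (meson le_SucI order_trans)
    then show "y \<le> v" using yk(2) unfolding is_sup_on_def by blast
  qed
  show ?thesis using cT ci cll sup by blast
qed

lemma interp:
  assumes "y' \<in> T" "y \<in> T" "ll_on UNIV y' y"
  shows "\<exists>y''\<in>T. ll_on UNIV y' y'' \<and> ll_on UNIV y'' y"
proof -
  obtain c where c: "\<forall>n. c n \<in> T" "incr_seq c" "\<forall>n. ll_on UNIV (c n) (c (Suc n))" "is_sup_on UNIV c y"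
    using T_O2[OF assms(2)] by blast
  obtain m where m: "y' \<le> c m" using assms(3) c unfolding ll_on_def by blast
  have "ll_on UNIV y' (c (Suc m))" using ll_mono[OF c(3)[rule_format, of m] m order_refl] .
  moreover have "ll_on UNIV (c (Suc m)) y"
    using ll_mono[OF c(3)[rule_format, of "Suc m"] order_refl] c(4) unfolding is_sup_on_def by blast
  ultimately show ?thesis using c(1) by blast
qed

lemma inf_fixed:
  assumes x: "x \<in> T" and y: "y \<in> T" and m: "is_inf_on UNIV x y m"
  shows "m \<in> T"
proof -
  have below: "\<alpha> g m \<le> m" if g: "g \<in> carrier G" for g
  proof -
    have "\<alpha> g m \<le> x" using a_le[OF g, of m x] x g m unfolding memT is_inf_on_def by metis
    moreover have "\<alpha> g m \<le> y" using a_le[OF g, of m y] y g m unfolding memT is_inf_on_def by metis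
    ultimately show ?thesis using m unfolding is_inf_on_def by blast
  qed
  show ?thesis unfolding memT
  proof
    fix g assume g: "g \<in> carrier G"
    have ig: "inv\<^bsub>G\<^esub> g \<in> carrier G" using G g by (simp add: group.inv_closed)
    have "m = \<alpha> g (\<alpha> (inv\<^bsub>G\<^esub> g) m)" using a_inv g by simp
    also have "\<dots> \<le> \<alpha> g m" using a_le[OF g] below[OF ig] by blast
    finally show "\<alpha> g m = m" using below[OF g] by (auto intro: order_antisym)
  qed
qed

lemma T_sub: "submonoid_on T"
  unfolding submonoid_on_def using a_zero a_add by (auto simp: memT)

lemma T_Cu: "Cu_on T"
  unfolding Cu_on_def
proof (intro conjI ballI allI impI)
  show "submonoid_on T" by (rule T_sub)
next
  fix x :: 'a show "0 \<le> x" by (rule pos)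
next
  fix z assume zT: "\<forall>n. z n \<in> T" and zi: "incr_seq z"
  obtain s where "is_sup_on UNIV z s" using S_O1[OF zi] by blast
  then show "\<exists>s. is_sup_on T z s" using supT_iff[OF zT zi] by blast
next
  fix x assume x: "x \<in> T"
  obtain c where c: "\<forall>n. c n \<in> T" "incr_seq c" "\<forall>n. ll_on UNIV (c n) (c (Suc n))" "is_sup_on UNIV c x"
    using T_O2[OF x] by blast
  show "\<exists>z. (\<forall>n. z n \<in> T) \<and> (\<forall>n. ll_on T (z n) (z (Suc n))) \<and> is_sup_on T z x"
    using c supT_iff[OF c(1,2)] llS_llT by blast
next
  fix x' x y' y assume T: "x' \<in> T" "x \<in> T" "y' \<in> T" "y \<in> T"
    and l: "ll_on T x' x" "ll_on T y' y"
  have "ll_on UNIV (x' + y') (x + y)" using S_O3 l ll_iff T by blast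
  then show "ll_on T (x' + y') (x + y)" using llS_llT by blast
next
  fix a b s t assume aT: "\<forall>n. a n \<in> T" and bT: "\<forall>n. b n \<in> T" and ai: "incr_seq a"
    and bi: "incr_seq b" and as: "is_sup_on T a s" and bs: "is_sup_on T b t"
  have abT: "\<forall>n. a n + b n \<in> T" using aT bT T_sub unfolding submonoid_on_def by blast
  have abi: "incr_seq (\<lambda>n. a n + b n)" using ai bi unfolding incr_seq_def by (simp add: add_mono)
  have "is_sup_on UNIV (\<lambda>n. a n + b n) (s + t)"
    using S_O4[OF ai bi] as bs supT_iff aT bT ai bi by blast
  then show "is_sup_on T (\<lambda>n. a n + b n) (s + t)" using supT_iff[OF abT abi] by blast
qed

lemma T_subCu: "sub_Cu T"
  unfolding sub_Cu_def using T_sub T_Cu supT_iff llT_llS by blast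

lemma T_wc: "weakly_cancellative_on (UNIV :: 'a set) \<Longrightarrow> weakly_cancellative_on T"
  unfolding weakly_cancellative_on_def
proof (intro ballI impI)
  fix x y z assume wc: "\<forall>x\<in>(UNIV::'a set). \<forall>y\<in>UNIV. \<forall>z\<in>UNIV. ll_on UNIV (x + z) (y + z) \<longrightarrow> ll_on UNIV x y"
    and T: "x \<in> T" "y \<in> T" "z \<in> T" and l: "ll_on T (x + z) (y + z)"
  have "x + z \<in> T" "y + z \<in> T" using T T_sub unfolding submonoid_on_def by blast+
  then have "ll_on UNIV (x + z) (y + z)" using l ll_iff by blast
  then have "ll_on UNIV x y" using wc by blast
  then show "ll_on T x y" using llS_llT by blast
qed

lemma T_O5: "O5_on (UNIV :: 'a set) \<Longrightarrow> O5_on T"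
  unfolding O5_on_def
proof (intro ballI impI)
  fix x y z x' y'
  assume o5: "\<forall>x\<in>(UNIV::'a set). \<forall>y\<in>UNIV. \<forall>z\<in>UNIV. \<forall>x'\<in>UNIV. \<forall>y'\<in>UNIV.
     x + y \<le> z \<longrightarrow> ll_on UNIV x' x \<longrightarrow> ll_on UNIV y' y \<longrightarrow>
     (\<exists>c\<in>UNIV. ll_on UNIV y' c \<and> x' + c \<le> z \<and> z \<le> x + c)"
    and T: "x \<in> T" "y \<in> T" "z \<in> T" "x' \<in> T" "y' \<in> T"
    and le: "x + y \<le> z" and lx: "ll_on T x' x" and ly: "ll_on T y' y"
  have lx': "ll_on UNIV x' x" and ly': "ll_on UNIV y' y" using lx ly T ll_iff by blast+
  obtain y'' where y'': "y'' \<in> T" "ll_on UNIV y' y''" "ll_on UNIV y'' y"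
    using interp[OF T(5) T(2) ly'] by blast
  obtain c where c: "ll_on UNIV y'' c" "x' + c \<le> z" "z \<le> x + c"
    using o5 le lx' y''(3) by blast
  have "y'' \<le> M c" using M_fixed_le[OF y''(1)] ll_incr[OF c(1)] .
  then have l1: "ll_on UNIV y' (M c)" using ll_mono[OF y''(2) order_refl] by blast
  have "x' + M c \<le> x' + c" using M_le_self by (simp add: add_left_mono)
  then have l2: "x' + M c \<le> z" using c(2) by (meson order_trans)
  have "z \<le> M c + x"
  proof (rule M_glb_add)
    fix g assume g: "g \<in> carrier G"
    have "\<alpha> g z \<le> \<alpha> g (x + c)" using a_le[OF g] c(3) by blast
    then show "z \<le> \<alpha> g c + x" using T g a_add[OF g] unfolding memT by (simp add: add.commute)
  qed
  then have l3: "z \<le> x + M c" by (simp add: add.commute)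
  show "\<exists>c\<in>T. ll_on T y' c \<and> x' + c \<le> z \<and> z \<le> x + c"
    using l1 l2 l3 M_T llS_llT by blast
qed

lemma T_O6: "O6_on (UNIV :: 'a set) \<Longrightarrow> O6_on T"
  unfolding O6_on_def
proof (intro ballI impI)
  fix x' x y z
  assume o6: "\<forall>x'\<in>(UNIV::'a set). \<forall>x\<in>UNIV. \<forall>y\<in>UNIV. \<forall>z\<in>UNIV.
     ll_on UNIV x' x \<longrightarrow> x \<le> y + z \<longrightarrow>
     (\<exists>v\<in>UNIV. \<exists>w\<in>UNIV. v \<le> x \<and> v \<le> y \<and> w \<le> x \<and> w \<le> z \<and> x' \<le> v + w)"
    and T: "x' \<in> T" "x \<in> T" "y \<in> T" "z \<in> T"
    and lx: "ll_on T x' x" and le: "x \<le> y + z"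
  have lx': "ll_on UNIV x' x" using lx T ll_iff by blast
  obtain v w where vw: "v \<le> x" "v \<le> y" "w \<le> x" "w \<le> z" "x' \<le> v + w"
    using o6 lx' le by blast
  obtain m1 where m1: "is_inf_on UNIV x y m1" using S_inf unfolding inf_semilattice_ordered_on_def by blast
  obtain m2 where m2: "is_inf_on UNIV x z m2" using S_inf unfolding inf_semilattice_ordered_on_def by blast
  have "m1 \<in> T" "m2 \<in> T" using inf_fixed T m1 m2 by blast+
  moreover have "v \<le> m1" "w \<le> m2" using vw m1 m2 unfolding is_inf_on_def by blast+
  then have "x' \<le> m1 + m2" using vw(5) add_mono order_trans by blast
  moreover have "m1 \<le> x" "m1 \<le> y" "m2 \<le> x" "m2 \<le> z" using m1 m2 unfolding is_inf_on_def by blast+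
  ultimately show "\<exists>v\<in>T. \<exists>w\<in>T. v \<le> x \<and> v \<le> y \<and> w \<le> x \<and> w \<le> z \<and> x' \<le> v + w" by blast
qed

lemma T_O7: "O7_on (UNIV :: 'a set) \<Longrightarrow> O7_on T"
  unfolding O7_on_def
proof (intro ballI impI)
  fix x' x y' y w
  assume o7: "\<forall>x'\<in>(UNIV::'a set). \<forall>x\<in>UNIV. \<forall>y'\<in>UNIV. \<forall>y\<in>UNIV. \<forall>w\<in>UNIV.
     ll_on UNIV x' x \<longrightarrow> x \<le> w \<longrightarrow> ll_on UNIV y' y \<longrightarrow> y \<le> w \<longrightarrow>
     (\<exists>z\<in>UNIV. ll_on UNIV x' z \<and> ll_on UNIV y' z \<and> z \<le> w \<and> z \<le> x + y)"
    and T: "x' \<in> T" "x \<in> T" "y' \<in> T" "y \<in> T" "w \<in> T"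
    and lx: "ll_on T x' x" and xw: "x \<le> w" and ly: "ll_on T y' y" and yw: "y \<le> w"
  have lx': "ll_on UNIV x' x" and ly': "ll_on UNIV y' y" using lx ly T ll_iff by blast+
  obtain x'' where x'': "x'' \<in> T" "ll_on UNIV x' x''" "ll_on UNIV x'' x"
    using interp[OF T(1) T(2) lx'] by blast
  obtain y'' where y'': "y'' \<in> T" "ll_on UNIV y' y''" "ll_on UNIV y'' y"
    using interp[OF T(3) T(4) ly'] by blast
  obtain z where z: "ll_on UNIV x'' z" "ll_on UNIV y'' z" "z \<le> w" "z \<le> x + y"
    using o7 x''(3) y''(3) xw yw by blast
  have "x'' \<le> M z" using M_fixed_le[OF x''(1)] ll_incr[OF z(1)] .
  then have l1: "ll_on UNIV x' (M z)" using ll_mono[OF x''(2) order_refl] by blast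
  have "y'' \<le> M z" using M_fixed_le[OF y''(1)] ll_incr[OF z(2)] .
  then have l2: "ll_on UNIV y' (M z)" using ll_mono[OF y''(2) order_refl] by blast
  have "M z \<le> w" "M z \<le> x + y" using M_le_self z(3,4) order_trans by blast+
  then show "\<exists>z\<in>T. ll_on T x' z \<and> ll_on T y' z \<and> z \<le> w \<and> z \<le> x + y"
    using l1 l2 M_T llS_llT by blast
qed

end

theorem lemma7p7:
  fixes G :: "('g, 'm) monoid_scheme" and \<alpha> :: "'g \<Rightarrow> 'a::ordered_comm_monoid_add \<Rightarrow> 'a"
  assumes S_Cu: "Cu_on (UNIV :: 'a set)"
    and S_inf: "inf_semilattice_ordered_on (UNIV :: 'a set)"
    and G: "group G" and G_fin: "finite (carrier G)"
    and act_iso: "\<forall>g\<in>carrier G. Cu_iso (\<alpha> g)"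
    and act_one: "\<alpha> \<one>\<^bsub>G\<^esub> = id"
    and act_mult: "\<forall>g\<in>carrier G. \<forall>h\<in>carrier G. \<alpha> (g \<otimes>\<^bsub>G\<^esub> h) = \<alpha> g \<circ> \<alpha> h"
  shows "sub_Cu (fixed_points G \<alpha>) \<and>
    (weakly_cancellative_on (UNIV :: 'a set) \<longrightarrow> weakly_cancellative_on (fixed_points G \<alpha>)) \<and>
    (O5_on (UNIV :: 'a set) \<longrightarrow> O5_on (fixed_points G \<alpha>)) \<and>
    (O6_on (UNIV :: 'a set) \<longrightarrow> O6_on (fixed_points G \<alpha>)) \<and>
    (O7_on (UNIV :: 'a set) \<longrightarrow> O7_on (fixed_points G \<alpha>))"
proof -
  interpret fixact G \<alpha> using assms unfolding fixact_def by blast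
  show ?thesis using T_subCu T_wc T_O5 T_O6 T_O7 by blast
qed

end
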